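(* Let $\eta\in\mathbb{F}_{2^n}$ with $\mathbb{F}_{2^n}=\mathbb{F}_2(\eta)$, let $m\in\mathbb{N}$ and let $M_1,\dots,M_n$ satisfy $\emptyset\neq M_i\subsetneq[m]$ for $1\le i\le n$. Let $D=\Delta_{M_1}+\eta\Delta_{M_2}+\cdots+\eta^{n-1}\Delta_{M_n}\subseteq\mathbb{F}_{2^n}^m$ and $D^*=D\setminus\{0\}$. Then $C_{D^*}$ is a linear code over $\mathbb{F}_{2^n}$ of length $2^{\sum_{j=1}^n|M_j|}-1$ and dimension $|\bigcup_{j=1}^nM_j|$. If $A_i$ denotes the number of codewords of $C_{D^*}$ of weight $i$ and $Z_i=|\{v\in\mathbb{F}_{2^n}^m: wt(c_{D^*}(v))=i\}|$ for $0\le i\le|D^*|$, then $Z_0=2^{n(m-|\bigcup_{j=1}^nM_j|)}$ and $Z_i=Z_0A_i$ for $1\le i\le|D^*|$.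
   Context: $[m]=\{1,\dots,m\}$; $\Delta_L=\{w\in\mathbb{F}_2^m:\{i:w_i\ne0\}\subseteq L\}$. $\Delta_{M_1}+\eta\Delta_{M_2}+\cdots+\eta^{n-1}\Delta_{M_n}=\{d_1+\eta d_2+\cdots+\eta^{n-1}d_n: d_i\in\Delta_{M_i}\}$. For an ordered finite set $P\subseteq\mathbb{F}_{2^n}^m$, $c_P(v)=(v\cdot d)_{d\in P}$ with $v\cdot d=\sum_iv_id_i$, and $C_P=\{c_P(v):v\in\mathbb{F}_{2^n}^m\}$. *)

theory Defs
  imports Complex_Main "HOL-Library.Function_Algebras"
begin

text \<open>F_2(eta): the smallest subfield of the field 'a containing eta (it automatically
contains the prime field, generated by 1).\<close>
definition gen_subfield :: "'a::field \<Rightarrow> 'a set" where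
  "gen_subfield \<eta> = \<Inter>{S. 0 \<in> S \<and> 1 \<in> S \<and> \<eta> \<in> S \<and>
      (\<forall>x\<in>S. \<forall>y\<in>S. x + y \<in> S \<and> x * y \<in> S) \<and>
      (\<forall>x\<in>S. - x \<in> S \<and> inverse x \<in> S)}"

text \<open>Vectors of length m over a ring: functions nat => 'a, coordinates 1..m, zero elsewhere.\<close>
definition vecs :: "nat \<Rightarrow> (nat \<Rightarrow> 'a::zero) set" where
  "vecs m = {v. \<forall>k. k \<notin> {1..m} \<longrightarrow> v k = 0}"

text \<open>Delta_L (inside F_2^m, F_2 = {0,1} being the prime field of 'a, char 2).\<close>
definition Delta :: "nat set \<Rightarrow> (nat \<Rightarrow> 'a::{zero,one}) set" where
  "Delta L = {w. \<forall>k. w k \<in> {0, 1} \<and> (k \<notin> L \<longrightarrow> w k = 0)}"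

definition Dset :: "'a::field \<Rightarrow> nat \<Rightarrow> (nat \<Rightarrow> nat set) \<Rightarrow> (nat \<Rightarrow> 'a) set" where
  "Dset \<eta> n M = {(\<lambda>k. \<Sum>i=1..n. \<eta> ^ (i - 1) * d i k) | d.
       \<forall>i\<in>{1..n}. d i \<in> Delta (M i)}"

definition dotp :: "nat \<Rightarrow> (nat \<Rightarrow> 'a::comm_ring_1) \<Rightarrow> (nat \<Rightarrow> 'a) \<Rightarrow> 'a" where
  "dotp m v d = (\<Sum>k=1..m. v k * d k)"

text \<open>c_P(v) for an ordered set P given as a distinct list ps; the codeword is a vector
of length (length ps), coordinates 0..length ps - 1, zero elsewhere.\<close>
definition cP :: "nat \<Rightarrow> (nat \<Rightarrow> 'a::comm_ring_1) list \<Rightarrow> (nat \<Rightarrow> 'a) \<Rightarrow> (nat \<Rightarrow> 'a)" where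
  "cP m ps v = (\<lambda>i. if i < length ps then dotp m v (ps ! i) else 0)"

definition CP :: "nat \<Rightarrow> (nat \<Rightarrow> 'a::comm_ring_1) list \<Rightarrow> (nat \<Rightarrow> 'a) set" where
  "CP m ps = cP m ps ` vecs m"

definition wt :: "nat \<Rightarrow> (nat \<Rightarrow> 'a::zero) \<Rightarrow> nat" where
  "wt N c = card {i. i < N \<and> c i \<noteq> 0}"

definition wscale :: "'a::field \<Rightarrow> (nat \<Rightarrow> 'a) \<Rightarrow> (nat \<Rightarrow> 'a)" where
  "wscale c x = (\<lambda>i. c * x i)"

definition linear_code :: "nat \<Rightarrow> (nat \<Rightarrow> 'a::field) set \<Rightarrow> bool" where
  "linear_code N C \<longleftrightarrow> (\<forall>c\<in>C. \<forall>i. N \<le> i \<longrightarrow> c i = 0) \<and> module.subspace wscale C"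

definition code_dim :: "(nat \<Rightarrow> 'a::field) set \<Rightarrow> nat" where
  "code_dim C = vector_space.dim wscale C"

end

theory Submission
  imports Defs "HOL-Number_Theory.Residues" "HOL-Library.FuncSet"
begin


lemma char2:
  assumes "card (UNIV :: 'a::{field,finite} set) = 2 ^ n"
  shows "(1::'a) + 1 = 0"
proof -
  have "CHAR('a) dvd 2 ^ n" using CHAR_dvd_CARD[where 'a='a] assms by simp
  then obtain i where i: "i \<le> n" "CHAR('a) = 2 ^ i"
    using divides_primepow_nat[of 2 "CHAR('a)" n] by auto
  have "i \<noteq> 0" using i CHAR_not_1'[where 'a='a] by auto
  have "(of_nat (2 ^ i) :: 'a) = 0" using i(2) of_nat_CHAR[where 'a='a] by metis
  hence "(2::'a) ^ i = 0" by simp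
  hence "(2::'a) = 0" by simp
  thus ?thesis by simp
qed

lemma char2_neg: "(1::'a::field) + 1 = 0 \<Longrightarrow> - (x::'a) = x"
  by (metis add.inverse_unique distrib_right mult_1 mult_zero_left)

lemma sum_apply_fun: "(\<Sum>x\<in>A. f x) (k::'b) = (\<Sum>x\<in>A. (f x k :: 'c::comm_monoid_add))"
  by (induction A rule: infinite_finite_induct) auto



lemma sum_in_closed:
  assumes "\<And>x y. x \<in> S \<Longrightarrow> y \<in> S \<Longrightarrow> x + y \<in> S" "0 \<in> S" "\<And>x. x \<in> A \<Longrightarrow> f x \<in> S"
  shows "sum f A \<in> S"
  using assms(3)
  by (induction A rule: infinite_finite_induct) (auto simp: assms(1,2))

lemma powers_indep:
  fixes \<eta> :: "'a::{field,finite}"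
  assumes card_field: "card (UNIV :: 'a set) = 2 ^ n"
    and gen: "gen_subfield \<eta> = UNIV"
    and c01: "\<forall>i<n. c i \<in> {0,1}"
    and z: "(\<Sum>i<n. c i * \<eta> ^ i) = 0"
  shows "\<forall>i<n. c i = 0"
proof (rule ccontr)
  have ch: "(1::'a) + 1 = 0" using char2 card_field by blast
  have neg: "-(x::'a) = x" for x using char2_neg[OF ch] .
  assume "\<not> (\<forall>i<n. c i = 0)"
  define I where "I = {i. i < n \<and> c i \<noteq> 0}"
  have Ine: "I \<noteq> {}" "finite I" using \<open>\<not> _\<close> by (auto simp: I_def)
  define k where "k = Max I"
  have kI: "k \<in> I" using Ine k_def by auto
  have kn: "k < n" and ck: "c k = 1" using kI c01 by (auto simp: I_def)
  have above: "c i = 0" if "k < i" "i < n" for i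
  proof (rule ccontr)
    assume "c i \<noteq> 0" hence "i \<in> I" using that by (simp add: I_def)
    hence "i \<le> k" using Max_ge[OF Ine(2)] k_def by simp
    thus False using that by simp
  qed
  have split: "{..<n} = {..<Suc k} \<union> {k<..<n}" using kn by auto
  have "(\<Sum>i<n. c i * \<eta> ^ i) = (\<Sum>i<Suc k. c i * \<eta> ^ i) + (\<Sum>i\<in>{k<..<n}. c i * \<eta> ^ i)"
    by (subst split, rule sum.union_disjoint) auto
  also have "(\<Sum>i<Suc k. c i * \<eta> ^ i) = (\<Sum>i<k. c i * \<eta> ^ i) + c k * \<eta> ^ k" by simp
  also have "(\<Sum>i\<in>{k<..<n}. c i * \<eta> ^ i) = 0" using above by auto
  finally have "(\<Sum>i<k. c i * \<eta> ^ i) + \<eta> ^ k = 0" using z ck by simp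
  hence rel: "\<eta> ^ k = (\<Sum>i<k. c i * \<eta> ^ i)"
    by (metis add.commute add_eq_0_iff neg)
  define F2 where "F2 = {0, 1::'a}"
  have F2add: "x + y \<in> F2" if "x \<in> F2" "y \<in> F2" for x y using that ch by (auto simp: F2_def)
  have F2mul: "x * y \<in> F2" if "x \<in> F2" "y \<in> F2" for x y using that by (auto simp: F2_def)
  define S where "S = {x. \<exists>a. (\<forall>i. a i \<in> F2) \<and> x = (\<Sum>i<k. a i * \<eta> ^ i)}"
  have Sintro: "(\<Sum>i<k. a i * \<eta> ^ i) \<in> S" if "\<forall>i. a i \<in> F2" for a
    unfolding S_def using that by blast
  have S0: "0 \<in> S" using Sintro[of "\<lambda>_. 0"] by (simp add: F2_def)
  have Sadd: "x + y \<in> S" if "x \<in> S" "y \<in> S" for x y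
  proof -
    obtain a where a: "\<forall>i. a i \<in> F2" "x = (\<Sum>i<k. a i * \<eta> ^ i)" using \<open>x \<in> S\<close> unfolding S_def by blast
    obtain b where b: "\<forall>i. b i \<in> F2" "y = (\<Sum>i<k. b i * \<eta> ^ i)" using \<open>y \<in> S\<close> unfolding S_def by blast
    have "x + y = (\<Sum>i<k. (a i + b i) * \<eta> ^ i)" by (simp add: a b sum.distrib distrib_right)
    moreover have "\<forall>i. a i + b i \<in> F2" using a b F2add by blast
    ultimately show ?thesis using Sintro[of "\<lambda>i. a i + b i"] by simp
  qed
  have Sscale: "t * x \<in> S" if "t \<in> F2" "x \<in> S" for t x
  proof -
    obtain a where a: "\<forall>i. a i \<in> F2" "x = (\<Sum>i<k. a i * \<eta> ^ i)" using \<open>x \<in> S\<close> unfolding S_def by blast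
    have "t * x = (\<Sum>i<k. (t * a i) * \<eta> ^ i)" by (simp add: a sum_distrib_left mult.assoc)
    moreover have "\<forall>i. t * a i \<in> F2" using a F2mul \<open>t \<in> F2\<close> by blast
    ultimately show ?thesis using Sintro[of "\<lambda>i. t * a i"] by simp
  qed
  have Spow: "\<eta> ^ j \<in> S" if "j \<le> k" for j
  proof (cases "j = k")
    case True
    have "\<eta> ^ k = (\<Sum>i<k. (if i < k then c i else 0) * \<eta> ^ i)" using rel by simp
    moreover have "\<forall>i. (if i < k then c i else 0) \<in> F2" using c01 kn by (auto simp: F2_def)
    ultimately show ?thesis using True Sintro[of "\<lambda>i. if i < k then c i else 0"] by simp
  next
    case False
    hence jk: "j < k" using that by simp
    have "\<eta> ^ j = (\<Sum>i<k. (if i = j then 1 else 0) * \<eta> ^ i)" using jk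
      by (subst sum.cong[OF refl, of _ _ "\<lambda>i. if i = j then \<eta> ^ i else 0"]) auto
    moreover have "\<forall>i. (if i = j then 1 else 0) \<in> F2" by (auto simp: F2_def)
    ultimately show ?thesis using Sintro[of "\<lambda>i. if i = j then 1 else 0"] by simp
  qed
  have Seta: "\<eta> * x \<in> S" if "x \<in> S" for x
  proof -
    obtain a where a: "\<forall>i. a i \<in> F2" "x = (\<Sum>i<k. a i * \<eta> ^ i)" using \<open>x \<in> S\<close> unfolding S_def by blast
    have "\<eta> * x = (\<Sum>i<k. a i * \<eta> ^ Suc i)" by (simp add: a sum_distrib_left ac_simps)
    also have "\<dots> \<in> S"
    proof (rule sum_in_closed[OF Sadd S0])
      fix i assume "i \<in> {..<k}"
      thus "a i * \<eta> ^ Suc i \<in> S" by (intro Sscale[OF a(1)[rule_format] Spow]) simp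
    qed
    finally show ?thesis .
  qed
  have Setapow: "\<eta> ^ j * x \<in> S" if "x \<in> S" for j x
    using that by (induction j) (auto simp: mult.assoc intro: Seta)
  have Smul: "x * y \<in> S" if "x \<in> S" "y \<in> S" for x y
  proof -
    obtain a where a: "\<forall>i. a i \<in> F2" "x = (\<Sum>i<k. a i * \<eta> ^ i)" using \<open>x \<in> S\<close> unfolding S_def by blast
    have "x * y = (\<Sum>i<k. a i * (\<eta> ^ i * y))" unfolding a(2) sum_distrib_right by (simp add: ac_simps)
    also have "\<dots> \<in> S"
    proof (rule sum_in_closed[OF Sadd S0])
      fix i assume "i \<in> {..<k}"
      show "a i * (\<eta> ^ i * y) \<in> S" by (intro Sscale[OF a(1)[rule_format] Setapow] \<open>y \<in> S\<close>)
    qed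
    finally show ?thesis .
  qed
  have k0: "k \<noteq> 0"
  proof
    assume "k = 0" then have "\<eta> ^ k = 0" using rel by simp
    with \<open>k = 0\<close> show False by simp
  qed
  have S1: "1 \<in> S" using Spow[of 0] by simp
  have Set: "\<eta> \<in> S" using Seta[OF S1] by simp
  have Sneg: "- x \<in> S" if "x \<in> S" for x using that neg[of x] by metis
  have Sinv: "inverse x \<in> S" if "x \<in> S" for x
  proof (cases "x = 0")
    case True then show ?thesis using S0 by simp
  next
    case False
    have "(\<lambda>y. x * y) ` S = S"
      by (rule endo_inj_surj) (auto intro: Smul that simp: inj_on_def False)
    then obtain y where "y \<in> S" "x * y = 1" using S1 by (metis imageE)
    hence "inverse x = y" using False by (metis inverse_unique)
    thus ?thesis using \<open>y \<in> S\<close> by simp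
  qed
  have "gen_subfield \<eta> \<subseteq> S"
    unfolding gen_subfield_def
    by (rule Inter_lower) (auto intro: S0 S1 Set Sadd Smul Sneg Sinv)
  hence US: "UNIV = S" using gen by auto
  have "S \<subseteq> (\<lambda>a. \<Sum>i<k. a i * \<eta> ^ i) ` (PiE {..<k} (\<lambda>_. F2))"
  proof
    fix x assume "x \<in> S"
    then obtain a where a: "\<forall>i. a i \<in> F2" "x = (\<Sum>i<k. a i * \<eta> ^ i)" unfolding S_def by blast
    have "x = (\<Sum>i<k. restrict a {..<k} i * \<eta> ^ i)" using a by simp
    moreover have "restrict a {..<k} \<in> PiE {..<k} (\<lambda>_. F2)" using a by auto
    ultimately show "x \<in> (\<lambda>a. \<Sum>i<k. a i * \<eta> ^ i) ` (PiE {..<k} (\<lambda>_. F2))" by blast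
  qed
  hence "card S \<le> card ((\<lambda>a. \<Sum>i<k. a i * \<eta> ^ i) ` (PiE {..<k} (\<lambda>_. F2)))"
    by (intro card_mono) (auto simp: F2_def)
  also have "\<dots> \<le> card (PiE {..<k} (\<lambda>_. F2))"
    by (rule card_image_le) (auto simp: F2_def intro!: finite_PiE)
  also have "\<dots> = 2 ^ k" by (simp add: card_PiE F2_def numeral_2_eq_2)
  finally have "2 ^ n \<le> (2::nat) ^ k" using US card_field by simp
  thus False using kn by (simp add: power_le_imp_le_exp leD)
qed



lemma comb_inj:
  fixes \<eta> :: "'a::{field,finite}"
  assumes card_field: "card (UNIV :: 'a set) = 2 ^ n"
    and gen: "gen_subfield \<eta> = UNIV"
    and a: "\<forall>i\<in>{1..n}. a i \<in> {0,1}" and b: "\<forall>i\<in>{1..n}. b i \<in> {0,1}"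
    and eq: "(\<Sum>i=1..n. \<eta> ^ (i - 1) * a i) = (\<Sum>i=1..n. \<eta> ^ (i - 1) * b i)"
  shows "\<forall>i\<in>{1..n}. a i = b i"
proof -
  have ch: "(1::'a) + 1 = 0" using char2 card_field by blast
  define c where "c i = a (Suc i) - b (Suc i)" for i
  have m1: "-(1::'a) = 1" using char2_neg[OF ch] .
  have c01: "\<forall>i<n. c i \<in> {0,1}"
  proof (intro allI impI)
    fix i assume "i < n" hence "Suc i \<in> {1..n}" by simp
    hence "a (Suc i) \<in> {0,1}" "b (Suc i) \<in> {0,1}" using a b by blast+
    thus "c i \<in> {0,1}" using m1 by (auto simp: c_def)
  qed
  have "(\<Sum>i<n. c i * \<eta> ^ i) = (\<Sum>i=Suc 0..n. \<eta> ^ (i - 1) * (a i - b i))"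
    by (subst sum.atLeast1_atMost_eq) (simp add: c_def mult.commute)
  also have "\<dots> = (\<Sum>i=1..n. \<eta> ^ (i - 1) * a i) - (\<Sum>i=1..n. \<eta> ^ (i - 1) * b i)"
    by (simp add: right_diff_distrib sum_subtractf)
  also have "\<dots> = 0" using eq by simp
  finally have "\<forall>i<n. c i = 0" using powers_indep[OF card_field gen c01] by blast
  thus ?thesis by (auto simp: c_def) (metis Suc_pred' le_eq_less_or_eq less_eq_Suc_le not_less_eq_eq eq_iff_diff_eq_0)
qed

lemma pow_nz:
  fixes \<eta> :: "'a::{field,finite}"
  assumes card_field: "card (UNIV :: 'a set) = 2 ^ n"
    and gen: "gen_subfield \<eta> = UNIV" and i: "i \<in> {1..n}"
  shows "\<eta> ^ (i - 1) \<noteq> 0"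
proof
  assume z: "\<eta> ^ (i - 1) = 0"
  define c where "c j = (if j = i - 1 then 1 else (0::'a))" for j
  have c01: "\<forall>j<n. c j \<in> {0,1}" by (auto simp: c_def)
  have "(\<Sum>j<n. c j * \<eta> ^ j) = (\<Sum>j<n. if j = i - 1 then \<eta> ^ j else 0)"
    by (rule sum.cong) (auto simp: c_def)
  also have "\<dots> = 0" using z i by simp
  finally have "\<forall>j<n. c j = 0" using powers_indep[OF card_field gen c01] by blast
  hence "c (i - 1) = 0" using i by auto
  thus False by (simp add: c_def)
qed

definition extz :: "nat set \<Rightarrow> (nat \<Rightarrow> 'a) \<Rightarrow> (nat \<Rightarrow> 'a::zero)" where
  "extz A f = (\<lambda>k. if k \<in> A then f k else 0)"

lemma supp_set_eq:
  fixes A :: "nat set"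
  assumes "0 \<in> B"
  shows "{w. \<forall>k. w k \<in> B \<and> (k \<notin> A \<longrightarrow> w k = (0::'a::zero))} = extz A ` PiE A (\<lambda>_. B)"
proof
  show "{w. \<forall>k. w k \<in> B \<and> (k \<notin> A \<longrightarrow> w k = 0)} \<subseteq> extz A ` PiE A (\<lambda>_. B)"
  proof
    fix w assume w: "w \<in> {w. \<forall>k. w k \<in> B \<and> (k \<notin> A \<longrightarrow> w k = 0)}"
    have "w = extz A (restrict w A)" using w by (auto simp: extz_def fun_eq_iff)
    moreover have "restrict w A \<in> PiE A (\<lambda>_. B)" using w by auto
    ultimately show "w \<in> extz A ` PiE A (\<lambda>_. B)" by blast
  qed
qed (use assms in \<open>auto simp: extz_def\<close>)

lemma extz_inj: "inj_on (extz A) (PiE A (\<lambda>_. B))"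
proof (rule inj_onI)
  fix f g assume f: "f \<in> PiE A (\<lambda>_. B)" and g: "g \<in> PiE A (\<lambda>_. B)" and e: "extz A f = extz A g"
  show "f = g"
  proof (rule PiE_ext[OF f g])
    fix x assume "x \<in> A" thus "f x = g x" using fun_cong[OF e, of x] by (simp add: extz_def)
  qed
qed

lemma card_supp:
  fixes A :: "nat set"
  assumes "0 \<in> B" "finite A"
  shows "card {w. \<forall>k. w k \<in> B \<and> (k \<notin> A \<longrightarrow> w k = (0::'a::zero))} = card B ^ card A"
  unfolding supp_set_eq[OF assms(1)] card_image[OF extz_inj] card_PiE[OF assms(2)] by simp

lemma finite_supp:
  fixes A :: "nat set"
  assumes "0 \<in> B" "finite A" "finite B"
  shows "finite {w. \<forall>k. w k \<in> B \<and> (k \<notin> A \<longrightarrow> w k = (0::'a::zero))}"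
  unfolding supp_set_eq[OF assms(1)] using assms by (auto intro!: finite_PiE)

lemma fiber_count:
  fixes f :: "'b::ab_group_add \<Rightarrow> 'c::ab_group_add"
  assumes fin: "finite V" and Vd: "\<And>u v. u \<in> V \<Longrightarrow> v \<in> V \<Longrightarrow> u - v \<in> V"
    and Va: "\<And>u v. u \<in> V \<Longrightarrow> v \<in> V \<Longrightarrow> u + v \<in> V"
    and fd: "\<And>u v. f (u - v) = f u - f v" and fa: "\<And>u v. f (u + v) = f u + f v"
  shows "card {v\<in>V. P (f v)} = card {v\<in>V. f v = 0} * card {c\<in>f ` V. P c}"
proof -
  have eq: "{v\<in>V. P (f v)} = (\<Union>c\<in>{c\<in>f ` V. P c}. {v\<in>V. f v = c})" by auto
  have fib: "card {v\<in>V. f v = c} = card {v\<in>V. f v = 0}" if cV: "c \<in> f ` V" for c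
  proof -
    obtain v0 where v0: "v0 \<in> V" "c = f v0" using cV by blast
    have "{v\<in>V. f v = c} = (\<lambda>k. v0 + k) ` {v\<in>V. f v = 0}"
    proof
      show "{v\<in>V. f v = c} \<subseteq> (\<lambda>k. v0 + k) ` {v\<in>V. f v = 0}"
      proof
        fix v assume v: "v \<in> {v\<in>V. f v = c}"
        have "v = v0 + (v - v0)" by simp
        moreover have "v - v0 \<in> {v\<in>V. f v = 0}" using v v0 Vd fd by auto
        ultimately show "v \<in> (\<lambda>k. v0 + k) ` {v\<in>V. f v = 0}" by blast
      qed
    next
      show "(\<lambda>k. v0 + k) ` {v\<in>V. f v = 0} \<subseteq> {v\<in>V. f v = c}"
        using v0 Va fa by auto
    qed
    moreover have "inj_on (\<lambda>k. v0 + k) {v\<in>V. f v = 0}" by (auto simp: inj_on_def)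
    ultimately show ?thesis by (simp add: card_image)
  qed
  have "card {v\<in>V. P (f v)} = (\<Sum>c\<in>{c\<in>f ` V. P c}. card {v\<in>V. f v = c})"
    unfolding eq by (rule card_UN_disjoint) (use fin in auto)
  also have "\<dots> = (\<Sum>c\<in>{c\<in>f ` V. P c}. card {v\<in>V. f v = 0})"
    by (rule sum.cong) (auto simp: fib)
  finally show ?thesis by simp
qed

interpretation W: vector_space "wscale :: 'a::field \<Rightarrow> (nat \<Rightarrow> 'a) \<Rightarrow> (nat \<Rightarrow> 'a)"
  by unfold_locales (auto simp: wscale_def fun_eq_iff algebra_simps)



lemma dotp_add: "dotp m (u + v) d = dotp m u d + dotp m v d"
  by (simp add: dotp_def sum.distrib distrib_right)
lemma dotp_diff: "dotp m (u - v) d = dotp m u d - dotp m v d"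
  by (simp add: dotp_def sum_subtractf left_diff_distrib)
lemma dotp_scale: "dotp m (wscale a v) d = a * dotp m v d"
  by (simp add: dotp_def wscale_def sum_distrib_left mult.assoc)

lemma cP_add: "cP m ps (u + v) = cP m ps u + cP m ps v"
  by (simp add: cP_def fun_eq_iff dotp_add)
lemma cP_diff: "cP m ps (u - v) = cP m ps u - cP m ps v"
  by (simp add: cP_def fun_eq_iff dotp_diff)
lemma cP_scale: "cP m ps (wscale a v) = wscale a (cP m ps v)"
  by (auto simp: cP_def wscale_def dotp_def sum_distrib_left mult.assoc fun_eq_iff)
lemma cP_zero: "cP m ps 0 = 0"
  by (simp add: cP_def fun_eq_iff dotp_def)
lemma cP_sum: "cP m ps (\<Sum>x\<in>A. f x) = (\<Sum>x\<in>A. cP m ps (f x))"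
proof (induction A rule: infinite_finite_induct)
  case (insert x F)
  then show ?case by (simp add: cP_add del: plus_fun_apply)
next
  case (infinite A)
  then show ?case by (metis sum.infinite cP_zero)
next
  case empty
  then show ?case by (simp only: sum.empty cP_zero)
qed

lemma cP_zero_iff: "cP m ps v = 0 \<longleftrightarrow> (\<forall>d\<in>set ps. dotp m v d = 0)"
  unfolding set_conv_nth cP_def by (auto simp: fun_eq_iff simp del: fun_eq_iff[symmetric])
    (metis ext)

lemma vecs_diff: "u \<in> vecs m \<Longrightarrow> v \<in> vecs m \<Longrightarrow> u - v \<in> vecs m"
  and vecs_add: "u \<in> vecs m \<Longrightarrow> v \<in> vecs m \<Longrightarrow> u + v \<in> vecs m"
  and vecs_scale: "v \<in> vecs m \<Longrightarrow> wscale a v \<in> vecs m"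
  and vecs_zero: "0 \<in> vecs m"
  by (auto simp: vecs_def wscale_def)

lemma vecs_eq: "vecs m = {w. \<forall>k. w k \<in> UNIV \<and> (k \<notin> {1..m} \<longrightarrow> w k = 0)}"
  by (auto simp: vecs_def)

lemma finite_vecs: "finite (vecs m :: (nat \<Rightarrow> 'a::{zero,finite}) set)"
  unfolding vecs_eq by (rule finite_supp) auto

lemma wt_zero_iff: "(\<forall>i\<ge>N. c i = 0) \<Longrightarrow> wt N c = 0 \<longleftrightarrow> c = 0"
  by (auto simp: wt_def fun_eq_iff) (meson not_le_imp_less)

theorem mainTheorem5:
  fixes \<eta> :: "'a::{field,finite}" and n m :: nat and M :: "nat \<Rightarrow> nat set"
    and ps :: "(nat \<Rightarrow> 'a) list"
  assumes card_field: "card (UNIV :: 'a set) = 2 ^ n"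
    and gen: "gen_subfield \<eta> = UNIV"
    and M_ne: "\<forall>i\<in>{1..n}. M i \<noteq> {}"
    and M_sub: "\<forall>i\<in>{1..n}. M i \<subset> {1..m}"
    and ps_enum: "distinct ps" "set ps = Dset \<eta> n M - {0}"
  shows "linear_code (length ps) (CP m ps)
    \<and> length ps = 2 ^ (\<Sum>j=1..n. card (M j)) - 1
    \<and> code_dim (CP m ps) = card (\<Union>j\<in>{1..n}. M j)
    \<and> card {v \<in> vecs m. wt (length ps) (cP m ps v) = 0}
        = 2 ^ (n * (m - card (\<Union>j\<in>{1..n}. M j)))
    \<and> (\<forall>i\<in>{1..length ps}.
         card {v \<in> vecs m. wt (length ps) (cP m ps v) = i}
         = card {v \<in> vecs m. wt (length ps) (cP m ps v) = 0}
           * card {c \<in> CP m ps. wt (length ps) c = i})"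
proof -
  define N where "N = length ps"
  define U where "U = (\<Union>j\<in>{1..n}. M j)"
  define \<Phi> where "\<Phi> d = (\<lambda>k. \<Sum>i=1..n. \<eta> ^ (i - 1) * d i k)" for d :: "nat \<Rightarrow> nat \<Rightarrow> 'a"
  have Msub: "M i \<subseteq> {1..m}" if "i \<in> {1..n}" for i using M_sub that by blast
  have Mfin: "finite (M i)" if "i \<in> {1..n}" for i using Msub[OF that] finite_subset by blast
  have Usub: "U \<subseteq> {1..m}" using Msub unfolding U_def by blast
  have Ufin: "finite U" using Usub finite_subset by blast
  have Delta_eq: "Delta L = {w. \<forall>k. w k \<in> {0,1::'a} \<and> (k \<notin> L \<longrightarrow> w k = 0)}" for L
    by (simp add: Delta_def)
  have cardDelta: "card (Delta L :: (nat \<Rightarrow> 'a) set) = 2 ^ card L" if "finite L" for L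
    unfolding Delta_eq by (subst card_supp) (auto simp: that numeral_2_eq_2)
  have Dset_eq: "Dset \<eta> n M = \<Phi> ` PiE {1..n} (\<lambda>i. Delta (M i))"
  proof
    show "Dset \<eta> n M \<subseteq> \<Phi> ` PiE {1..n} (\<lambda>i. Delta (M i))"
    proof
      fix x assume "x \<in> Dset \<eta> n M"
      then obtain d where d: "x = (\<lambda>k. \<Sum>i=1..n. \<eta> ^ (i - 1) * d i k)" "\<forall>i\<in>{1..n}. d i \<in> Delta (M i)"
        unfolding Dset_def by blast
      have "x = \<Phi> (restrict d {1..n})" unfolding d(1) \<Phi>_def
        by (auto simp: fun_eq_iff intro!: sum.cong)
      moreover have "restrict d {1..n} \<in> PiE {1..n} (\<lambda>i. Delta (M i))" using d(2) by auto
      ultimately show "x \<in> \<Phi> ` PiE {1..n} (\<lambda>i. Delta (M i))" by blast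
    qed
  next
    show "\<Phi> ` PiE {1..n} (\<lambda>i. Delta (M i)) \<subseteq> Dset \<eta> n M"
      unfolding Dset_def \<Phi>_def by (auto simp: PiE_def Pi_def)
  qed
  have Phi_inj: "inj_on \<Phi> (PiE {1..n} (\<lambda>i. Delta (M i)))"
  proof (rule inj_onI)
    fix d d' assume d: "d \<in> PiE {1..n} (\<lambda>i. Delta (M i))" and d': "d' \<in> PiE {1..n} (\<lambda>i. Delta (M i))"
      and e: "\<Phi> d = \<Phi> d'"
    show "d = d'"
    proof (rule PiE_ext[OF d d'])
      fix i assume i: "i \<in> {1..n}"
      show "d i = d' i"
      proof
        fix k
        have "\<forall>j\<in>{1..n}. d j k \<in> {0,1}" "\<forall>j\<in>{1..n}. d' j k \<in> {0,1}"
          using d d' by (auto simp: Delta_def)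
        moreover have "(\<Sum>j=1..n. \<eta> ^ (j - 1) * d j k) = (\<Sum>j=1..n. \<eta> ^ (j - 1) * d' j k)"
          using fun_cong[OF e, of k] by (simp add: \<Phi>_def)
        ultimately show "d i k = d' i k"
          using comb_inj[OF card_field gen, of "\<lambda>j. d j k" "\<lambda>j. d' j k"] i by blast
      qed
    qed
  qed
  have cardD: "card (Dset \<eta> n M) = 2 ^ (\<Sum>j=1..n. card (M j))"
    unfolding Dset_eq card_image[OF Phi_inj]
    by (simp add: card_PiE cardDelta Mfin power_sum)
  have D0: "0 \<in> Dset \<eta> n M"
    unfolding Dset_def by (rule CollectI, rule exI[of _ "\<lambda>_ _. 0"]) (auto simp: Delta_def fun_eq_iff)
  have "card (Dset \<eta> n M) \<noteq> 0" using cardD by simp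
  hence finD: "finite (Dset \<eta> n M)" by (meson card_eq_0_iff)
  have lenps: "length ps = 2 ^ (\<Sum>j=1..n. card (M j)) - 1"
    using distinct_card[OF ps_enum(1)] ps_enum(2) cardD D0 finD by (simp add: card_Diff_singleton)
  have ker: "cP m ps v = 0 \<longleftrightarrow> (\<forall>k\<in>U. v k = 0)" for v
  proof
    assume "cP m ps v = 0"
    hence z: "\<forall>d\<in>set ps. dotp m v d = 0" by (simp add: cP_zero_iff)
    show "\<forall>k\<in>U. v k = 0"
    proof
      fix k assume "k \<in> U"
      then obtain i where i: "i \<in> {1..n}" "k \<in> M i" by (auto simp: U_def)
      have km: "k \<in> {1..m}" using i Msub by blast
      define dd where "dd j = (if j = i then (\<lambda>l. if l = k then 1 else 0) else (\<lambda>_. 0::'a))" for j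
      have "\<Phi> dd \<in> Dset \<eta> n M" unfolding Dset_def \<Phi>_def
        by (rule CollectI, rule exI[of _ dd]) (auto simp: dd_def Delta_def i)
      have Phik: "\<Phi> dd = (\<lambda>l. if l = k then \<eta> ^ (i - 1) else 0)"
      proof
        fix l
        have "(\<Sum>j=1..n. \<eta> ^ (j - 1) * dd j l) = (\<Sum>j=1..n. if j = i then \<eta> ^ (j - 1) * (if l = k then 1 else 0) else 0)"
          by (rule sum.cong) (auto simp: dd_def)
        also have "\<dots> = (if l = k then \<eta> ^ (i - 1) else 0)" using i(1) by simp
        finally show "\<Phi> dd l = (if l = k then \<eta> ^ (i - 1) else 0)" by (simp add: \<Phi>_def)
      qed
      have nz: "\<eta> ^ (i - 1) \<noteq> 0" using pow_nz[OF card_field gen i(1)] .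
      have "\<Phi> dd \<noteq> 0" using nz Phik by (auto simp: fun_eq_iff)
      hence "\<Phi> dd \<in> set ps" using \<open>\<Phi> dd \<in> Dset \<eta> n M\<close> ps_enum(2) by simp
      hence "dotp m v (\<Phi> dd) = 0" using z by blast
      moreover have "dotp m v (\<Phi> dd) = v k * \<eta> ^ (i - 1)"
        unfolding dotp_def Phik using km by (simp add: if_distrib cong: if_cong)
      ultimately show "v k = 0" using nz by (metis mult_eq_0_iff)
    qed
  next
    assume vU: "\<forall>k\<in>U. v k = 0"
    have "dotp m v x = 0" if "x \<in> Dset \<eta> n M" for x
    proof -
      obtain d where d: "x = (\<lambda>k. \<Sum>i=1..n. \<eta> ^ (i - 1) * d i k)" "\<forall>i\<in>{1..n}. d i \<in> Delta (M i)"
        using \<open>x \<in> Dset \<eta> n M\<close> unfolding Dset_def by blast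
      have "v k * x k = 0" for k
      proof (cases "k \<in> U")
        case True then show ?thesis using vU by simp
      next
        case False
        have "d i k = 0" if "i \<in> {1..n}" for i
          using d(2) that False by (auto simp: Delta_def U_def)
        hence "x k = 0" unfolding d(1) by simp
        then show ?thesis by simp
      qed
      thus ?thesis unfolding dotp_def by (intro sum.neutral) blast
    qed
    thus "cP m ps v = 0" using ps_enum(2) by (simp add: cP_zero_iff)
  qed
  have lc: "linear_code (length ps) (CP m ps)"
    unfolding linear_code_def W.subspace_def CP_def
  proof (intro conjI ballI allI impI)
    show "c i = 0" if "c \<in> cP m ps ` vecs m" "length ps \<le> i" for c i
      using that by (auto simp: cP_def)
    show "0 \<in> cP m ps ` vecs m" using cP_zero vecs_zero by (metis image_eqI)
    show "x + y \<in> cP m ps ` vecs m" if xy: "x \<in> cP m ps ` vecs m" "y \<in> cP m ps ` vecs m" for x y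
    proof -
      obtain a b where "a \<in> vecs m" "b \<in> vecs m" "x = cP m ps a" "y = cP m ps b" using xy by blast
      thus ?thesis using cP_add[of m ps a b] vecs_add[of a m b] by (metis image_eqI)
    qed
    show "wscale c x \<in> cP m ps ` vecs m" if xs: "x \<in> cP m ps ` vecs m" for c x
    proof -
      obtain a where "a \<in> vecs m" "x = cP m ps a" using xs by blast
      thus ?thesis using cP_scale[of m ps c a] vecs_scale[of a m c] by (metis image_eqI)
    qed
  qed
  define e where "e k = (\<lambda>l::nat. if l = k then 1 else (0::'a))" for k
  define g where "g k = cP m ps (e k)" for k
  have ev: "e k \<in> vecs m" if "k \<in> {1..m}" for k using that by (auto simp: vecs_def e_def)
  have g_inj: "inj_on g U"
  proof (rule inj_onI)
    fix k k' assume k: "k \<in> U" and "k' \<in> U" and "g k = g k'"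
    hence "cP m ps (e k - e k') = 0" by (simp add: g_def cP_diff)
    hence "(e k - e k') k = 0" using ker k by blast
    thus "k = k'" by (auto simp: e_def split: if_splits)
  qed
  have dim: "code_dim (CP m ps) = card U"
    unfolding code_dim_def
  proof (rule W.dim_unique[of "g ` U"])
    show "g ` U \<subseteq> CP m ps" using ev Usub by (auto simp: CP_def g_def)
    show "card (g ` U) = card U" using card_image[OF g_inj] .
    show "CP m ps \<subseteq> W.span (g ` U)"
    proof
      fix x assume "x \<in> CP m ps"
      then obtain v where v: "v \<in> vecs m" "x = cP m ps v" by (auto simp: CP_def)
      have veq: "v = (\<Sum>k\<in>{1..m}. wscale (v k) (e k))"
      proof
        fix l
        have "(\<Sum>k\<in>{1..m}. wscale (v k) (e k)) l = (\<Sum>k\<in>{1..m}. if l = k then v k else 0)"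
          by (simp add: sum_apply_fun wscale_def e_def if_distrib cong: if_cong)
        also have "\<dots> = v l" using v(1) by (auto simp: vecs_def)
        finally show "v l = (\<Sum>k\<in>{1..m}. wscale (v k) (e k)) l" by simp
      qed
      have "x = cP m ps (\<Sum>k\<in>{1..m}. wscale (v k) (e k))" using v(2) arg_cong[OF veq, of "cP m ps"] by simp
      also have "\<dots> = (\<Sum>k\<in>{1..m}. wscale (v k) (g k))" by (simp only: cP_sum cP_scale g_def)
      also have "\<dots> \<in> W.span (g ` U)"
      proof (rule W.span_sum)
        fix k assume k: "k \<in> {1..m}"
        show "wscale (v k) (g k) \<in> W.span (g ` U)"
        proof (cases "k \<in> U")
          case True then show ?thesis by (intro W.span_scale W.span_base) simp
        next
          case False
          have "g k = 0" unfolding g_def using ker False by (auto simp: e_def)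
          then show ?thesis using W.span_zero by (simp add: wscale_def zero_fun_def)
        qed
      qed
      finally show "x \<in> W.span (g ` U)" .
    qed
    show "W.independent (g ` U)"
      unfolding W.independent_explicit_module
    proof (intro allI impI)
      fix t c x assume t: "finite t" "t \<subseteq> g ` U" and s: "(\<Sum>v\<in>t. wscale (c v) v) = 0" and x: "x \<in> t"
      define T where "T = {k\<in>U. g k \<in> t}"
      have tT: "t = g ` T" using t(2) by (auto simp: T_def)
      have TU: "T \<subseteq> U" by (auto simp: T_def)
      have injT: "inj_on g T" using g_inj TU by (rule inj_on_subset)
      have finT: "finite T" using Ufin TU finite_subset by blast
      obtain l where l: "l \<in> T" "x = g l" using x tT by blast
      define w where "w = (\<Sum>k\<in>T. wscale (c (g k)) (e k))"
      have "cP m ps w = (\<Sum>k\<in>T. wscale (c (g k)) (g k))"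
        unfolding w_def cP_sum cP_scale g_def ..
      also have "\<dots> = 0" using s sum.reindex[OF injT, of "\<lambda>v. wscale (c v) v"] tT by simp
      finally have "w l = 0" using ker l(1) TU by blast
      moreover have "w l = c (g l)"
      proof -
        have "w l = (\<Sum>k\<in>T. if l = k then c (g k) else 0)"
          by (simp add: w_def sum_apply_fun wscale_def e_def if_distrib cong: if_cong)
        also have "\<dots> = c (g l)" using l(1) finT by simp
        finally show ?thesis .
      qed
      ultimately show "c x = 0" using l by simp
    qed
  qed
  have K_eq: "{v \<in> vecs m. wt N (cP m ps v) = 0} = {v \<in> vecs m. cP m ps v = 0}"
  proof -
    have hz: "wt N (cP m ps v) = 0 \<longleftrightarrow> cP m ps v = 0" for v
      by (rule wt_zero_iff) (simp add: cP_def N_def)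
    show ?thesis by (simp only: hz)
  qed
  have K_eq2: "{v \<in> vecs m. cP m ps v = 0} = {w. \<forall>k. w k \<in> UNIV \<and> (k \<notin> {1..m} - U \<longrightarrow> w k = 0)}"
    using ker Usub by (auto simp: vecs_def)
  have cardK: "card {v \<in> vecs m. wt N (cP m ps v) = 0} = 2 ^ (n * (m - card U))"
  proof -
    have "card {v \<in> vecs m. wt N (cP m ps v) = 0} = card (UNIV :: 'a set) ^ card ({1..m} - U)"
      unfolding K_eq K_eq2 by (rule card_supp) auto
    also have "card ({1..m} - U) = m - card U" using Usub Ufin by (simp add: card_Diff_subset)
    finally show ?thesis using card_field by (simp add: power_mult)
  qed
  have Zi: "card {v \<in> vecs m. wt N (cP m ps v) = i}
         = card {v \<in> vecs m. wt N (cP m ps v) = 0} * card {c \<in> CP m ps. wt N c = i}" for i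
    unfolding K_eq CP_def
    by (rule fiber_count) (auto intro: vecs_diff vecs_add finite_vecs cP_diff cP_add)
  show ?thesis
    using lc lenps dim cardK Zi by (simp add: N_def U_def)
qed


end
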